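(* Suppose that property LD holds and $\inf_{E\in\mathbb{R}}L(E)>0$. Then for $P$-almost every $\omega\in\Omega$, $$\liminf_{N\to\infty}\left(-\frac1N\log\mathcal{I}(N,\omega)\right)>0.$$
   Context: Let $(\Omega,\mathcal F,P)$ be a probability space and $\phi:\Omega\to\Omega$ a measurable bijection with measurable inverse, $P$-preserving and ergodic. Let $f:\Omega\to\mathbb{R}$ be bounded measurable and $v_\omega(n)=f(\phi^n\omega)$, $n\in\mathbb{Z}$. For $E\in\mathbb{R}$, $T_{N,\omega}(E)=A_{N,\omega}(E)\cdots A_{1,\omega}(E)$ with $A_{n,\omega}(E)=\begin{pmatrix}v_\omega(n)-E&-1\\1&0\end{pmatrix}$; $\|\cdot\|$ is the operator norm. The Lyapunov exponent is $L(E)=\lim_{N\to\infty}\frac1N\int_\Omega\log\|T_{N,\omega}(E)\|\,dP(\omega)$. Define $\mathcal{I}(N,\omega)=\int_{-\infty}^{\infty}\frac{dE}{\|T_{N,\omega}(E)\|^2}$. Property LD (large deviation type estimate) means: for every $\epsilon>0$ and every finite closed interval $[a,b]$ there are constants $C,\eta>0$ such that $P\left(\left\{\omega:\left|\frac1N\log\|T_{N,\omega}(E)\|-L(E)\right|\ge\epsilon\right\}\right)\le Ce^{-\eta N}$ for all $N\in\mathbb{N}$ and all $E\in[a,b]$. *)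

theory Defs
  imports "HOL-Probability.Probability"
begin

definition transfer_step :: "real \<Rightarrow> real \<Rightarrow> real^2^2" where
  "transfer_step vn E = vector [vector [vn - E, -1], vector [1, 0]]"

fun transfer :: "('a \<Rightarrow> 'a) \<Rightarrow> ('a \<Rightarrow> real) \<Rightarrow> real \<Rightarrow> nat \<Rightarrow> 'a \<Rightarrow> real^2^2" where
  "transfer \<phi> f E 0 \<omega> = mat 1"
| "transfer \<phi> f E (Suc n) \<omega> = transfer_step (f ((\<phi> ^^ Suc n) \<omega>)) E ** transfer \<phi> f E n \<omega>"

definition opnorm :: "real^2^2 \<Rightarrow> real" where
  "opnorm A = onorm (\<lambda>x. A *v x)"

definition lyap :: "'a measure \<Rightarrow> ('a \<Rightarrow> 'a) \<Rightarrow> ('a \<Rightarrow> real) \<Rightarrow> real \<Rightarrow> real" where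
  "lyap M \<phi> f E = lim (\<lambda>N. (1 / real N) * (\<integral>\<omega>. ln (opnorm (transfer \<phi> f E N \<omega>)) \<partial>M))"

definition II :: "('a \<Rightarrow> 'a) \<Rightarrow> ('a \<Rightarrow> real) \<Rightarrow> nat \<Rightarrow> 'a \<Rightarrow> real" where
  "II \<phi> f N \<omega> = (\<integral>E. 1 / (opnorm (transfer \<phi> f E N \<omega>))^2 \<partial>lborel)"

definition property_LD :: "'a measure \<Rightarrow> ('a \<Rightarrow> 'a) \<Rightarrow> ('a \<Rightarrow> real) \<Rightarrow> bool" where
  "property_LD M \<phi> f \<longleftrightarrow>
     (\<forall>\<epsilon>>0. \<forall>a b. a \<le> b \<longrightarrow>
        (\<exists>C \<eta>. C > 0 \<and> \<eta> > 0 \<and>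
          (\<forall>N::nat. N \<ge> 1 \<longrightarrow> (\<forall>E\<in>{a..b}.
             measure M {\<omega> \<in> space M.
               \<bar>(1 / real N) * ln (opnorm (transfer \<phi> f E N \<omega>)) - lyap M \<phi> f E\<bar> \<ge> \<epsilon>}
             \<le> C * exp (- \<eta> * real N)))))"

definition ergodic_map :: "'a measure \<Rightarrow> ('a \<Rightarrow> 'a) \<Rightarrow> bool" where
  "ergodic_map M \<phi> \<longleftrightarrow>
     (\<forall>A\<in>sets M. \<phi> -` A \<inter> space M = A \<longrightarrow> measure M A = 0 \<or> measure M A = 1)"

end

theory Submission
  imports Defs
begin


lemma ts_entries:
  "transfer_step v E $ 1 $ 1 = v - E" "transfer_step v E $ 1 $ 2 = -1"
  "transfer_step v E $ 2 $ 1 = 1" "transfer_step v E $ 2 $ 2 = 0"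
  by (simp_all add: transfer_step_def)

lemma mm2: "((A::real^2^2) ** B) $ i $ j = A$i$1 * B$1$j + A$i$2 * B$2$j"
  by (simp add: matrix_matrix_mult_def sum_2)

lemma det_ts: "det (transfer_step v E) = 1"
  by (simp add: det_2 ts_entries)

lemma det_transfer: "det (transfer \<phi> f E n \<omega>) = 1"
proof (induction n)
  case 0 show ?case by simp
next
  case (Suc n) show ?case
    by (simp only: transfer.simps det_mul det_ts Suc mult_1_left)
qed

lemma opnorm_ge_col: "norm (column i A) \<le> opnorm A"
  unfolding opnorm_def by (rule norm_column_le_onorm)

lemma norm2: "norm (x::real^2) = sqrt ((x$1)^2 + (x$2)^2)"
  by (simp add: norm_vec_def L2_set_def sum_2)

lemma opnorm_ge1_det:
  fixes A :: "real^2^2" assumes "det A = 1" shows "opnorm A \<ge> 1"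
proof -
  let ?a = "A$1$1" and ?b = "A$1$2" and ?c = "A$2$1" and ?d = "A$2$2"
  have n1: "norm (column 1 A) = sqrt (?a^2 + ?c^2)" by (simp add: norm2 column_def)
  have n2: "norm (column 2 A) = sqrt (?b^2 + ?d^2)" by (simp add: norm2 column_def)
  have d: "?a * ?d - ?b * ?c = 1" using assms by (simp add: det_2)
  have id: "\<And>a b c d::real. (a^2 + c^2) * (b^2 + d^2) = (a * d - b * c)^2 + (a * b + c * d)^2"
    by (simp add: power2_eq_square algebra_simps)
  have "1 \<le> (?a^2 + ?c^2) * (?b^2 + ?d^2)"
    unfolding id d by simp
  hence "1 \<le> sqrt ((?a^2 + ?c^2) * (?b^2 + ?d^2))" by simp
  hence "1 \<le> norm (column 1 A) * norm (column 2 A)" by (simp add: n1 n2 real_sqrt_mult)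
  have "1 \<le> norm (column 1 A) \<or> 1 \<le> norm (column 2 A)"
  proof (rule ccontr)
    assume "\<not> ?thesis"
    hence "norm (column 1 A) * norm (column 2 A) < 1 * 1"
      by (intro mult_strict_mono') auto
    thus False using \<open>1 \<le> norm (column 1 A) * norm (column 2 A)\<close> by simp
  qed
  thus ?thesis using opnorm_ge_col[of 1 A] opnorm_ge_col[of 2 A] by linarith
qed

lemma opnorm_transfer_ge1: "opnorm (transfer \<phi> f E n \<omega>) \<ge> 1"
  by (rule opnorm_ge1_det[OF det_transfer])

lemma tr_Suc_11: "transfer \<phi> f E (Suc n) \<omega> $ 1 $ 1 =
   (f ((\<phi> ^^ Suc n) \<omega>) - E) * transfer \<phi> f E n \<omega> $ 1 $ 1 - transfer \<phi> f E n \<omega> $ 2 $ 1"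
  by (simp only: transfer.simps mm2 ts_entries)

lemma tr_Suc_21: "transfer \<phi> f E (Suc n) \<omega> $ 2 $ 1 = transfer \<phi> f E n \<omega> $ 1 $ 1"
  by (simp only: transfer.simps mm2 ts_entries)

lemma growth_aux:
  assumes B: "\<And>k. \<bar>f ((\<phi> ^^ k) \<omega>)\<bar> \<le> B" and r: "1 \<le> \<bar>E\<bar> - B - 1"
  shows "(\<bar>E\<bar> - B - 1) ^ n \<le> \<bar>transfer \<phi> f E n \<omega> $ 1 $ 1\<bar> \<and>
         \<bar>transfer \<phi> f E n \<omega> $ 2 $ 1\<bar> \<le> \<bar>transfer \<phi> f E n \<omega> $ 1 $ 1\<bar>"
proof (induction n)
  case 0 show ?case by (simp add: mat_def)
next
  case (Suc n)
  define a where "a = transfer \<phi> f E n \<omega> $ 1 $ 1"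
  define b where "b = transfer \<phi> f E n \<omega> $ 2 $ 1"
  define v where "v = f ((\<phi> ^^ Suc n) \<omega>)"
  have ih: "(\<bar>E\<bar> - B - 1) ^ n \<le> \<bar>a\<bar>" "\<bar>b\<bar> \<le> \<bar>a\<bar>" using Suc by (auto simp: a_def b_def)
  have vb: "\<bar>v\<bar> \<le> B" using B[of "Suc n"] v_def by simp
  have "\<bar>(v - E) * a - b\<bar> \<ge> \<bar>v - E\<bar> * \<bar>a\<bar> - \<bar>b\<bar>"
    using abs_triangle_ineq4[of "(v - E) * a" b] by (simp add: abs_mult)
  moreover have "\<bar>v - E\<bar> \<ge> \<bar>E\<bar> - B" using vb by linarith
  hence "\<bar>v - E\<bar> * \<bar>a\<bar> \<ge> (\<bar>E\<bar> - B) * \<bar>a\<bar>" by (simp add: mult_right_mono)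
  ultimately have m: "\<bar>(v - E) * a - b\<bar> \<ge> (\<bar>E\<bar> - B - 1) * \<bar>a\<bar>"
    using ih(2) by (simp add: algebra_simps)
  have "(\<bar>E\<bar> - B - 1) ^ Suc n \<le> (\<bar>E\<bar> - B - 1) * \<bar>a\<bar>"
    using ih(1) r by (simp add: mult_left_mono)
  moreover have "1 * \<bar>a\<bar> \<le> (\<bar>E\<bar> - B - 1) * \<bar>a\<bar>"
    by (rule mult_right_mono[OF r]) simp
  ultimately have "(\<bar>E\<bar> - B - 1) ^ Suc n \<le> \<bar>(v - E) * a - b\<bar> \<and> \<bar>a\<bar> \<le> \<bar>(v - E) * a - b\<bar>"
    using m by linarith
  thus ?case
    unfolding tr_Suc_11 tr_Suc_21 a_def[symmetric] b_def[symmetric] v_def[symmetric] .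
qed

lemma opnorm_growth:
  assumes B: "\<And>k. \<bar>f ((\<phi> ^^ k) \<omega>)\<bar> \<le> B" and r: "1 \<le> \<bar>E\<bar> - B - 1"
  shows "(\<bar>E\<bar> - B - 1) ^ n \<le> opnorm (transfer \<phi> f E n \<omega>)"
proof -
  have "\<bar>transfer \<phi> f E n \<omega> $ 1 $ 1\<bar> \<le> norm (column 1 (transfer \<phi> f E n \<omega>))"
    using component_le_norm_cart[of "column 1 (transfer \<phi> f E n \<omega>)" 1]
    by (simp add: column_def)
  moreover have "(\<bar>E\<bar> - B - 1) ^ n \<le> \<bar>transfer \<phi> f E n \<omega> $ 1 $ 1\<bar>"
    using growth_aux[of f \<phi> \<omega> B E n] B r by blast
  ultimately show ?thesis using opnorm_ge_col[of 1 "transfer \<phi> f E n \<omega>"] by linarith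
qed

lemma opnorm_le_sum: "opnorm (A::real^2^2) \<le> 4 * norm A"
proof -
  have c: "\<bar>A$i$j\<bar> \<le> norm A" for i j
    using component_le_norm_cart[of "A$i" j] Finite_Cartesian_Product.norm_nth_le[of A i] by linarith
  have "opnorm A \<le> (\<Sum>i\<in>UNIV. \<Sum>j\<in>UNIV. \<bar>A $ i $ j\<bar>)"
    unfolding opnorm_def by (rule onorm_le_matrix_component_sum)
  also have "\<dots> \<le> 4 * norm A" using c[of 1 1] c[of 1 2] c[of 2 1] c[of 2 2]
    by (simp add: sum_2)
  finally show ?thesis .
qed

lemma opnorm_tri: "opnorm (A::real^2^2) \<le> opnorm B + opnorm (A - B)"
proof -
  have eq: "(\<lambda>x. A *v x) = (\<lambda>x. B *v x + (A - B) *v x)"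
    by (simp add: matrix_vector_mult_diff_rdistrib)
  show ?thesis unfolding opnorm_def eq
    by (rule onorm_triangle) auto
qed

lemma opnorm_cont: "continuous_on UNIV (opnorm :: real^2^2 \<Rightarrow> real)"
proof (rule lipschitz_on_continuous_on[of 4], rule lipschitz_onI)
  fix x y :: "real^2^2"
  have "opnorm x \<le> opnorm y + 4 * norm (x - y)" using opnorm_tri[of x y] opnorm_le_sum[of "x - y"] by linarith
  moreover have "opnorm y \<le> opnorm x + 4 * norm (y - x)" using opnorm_tri[of y x] opnorm_le_sum[of "y - x"] by linarith
  ultimately show "dist (opnorm x) (opnorm y) \<le> 4 * dist x y"
    by (simp add: dist_real_def dist_norm norm_minus_commute abs_le_iff)
qed simp

lemma opnorm_measurable[measurable]: "opnorm \<in> borel_measurable borel"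
  by (rule borel_measurable_continuous_onI[OF opnorm_cont])

lemma mm_cont: "continuous_on UNIV (\<lambda>x::(real^2^2) \<times> (real^2^2). fst x ** snd x)"
  unfolding matrix_matrix_mult_def
  by (intro continuous_intros)

definition "P0 = (vector [vector [1, 0], vector [0, 0]] :: real^2^2)"
definition "Q0 = (vector [vector [0, -1], vector [1, 0]] :: real^2^2)"

lemma ts_eq: "transfer_step v E = (v - E) *\<^sub>R P0 + Q0"
  unfolding vec_eq_iff forall_2 by (simp add: transfer_step_def P0_def Q0_def)

lemma transfer_measurable:
  assumes e[measurable]: "e \<in> borel_measurable Q" and w[measurable]: "w \<in> measurable Q M"
    and ph[measurable]: "\<phi> \<in> measurable M M" and f[measurable]: "f \<in> borel_measurable M"
  shows "(\<lambda>q. transfer \<phi> f (e q) n (w q)) \<in> borel_measurable Q"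
proof (induction n)
  case 0 show ?case by simp
next
  case (Suc n)
  have "(\<lambda>q. transfer_step (f ((\<phi> ^^ Suc n) (w q))) (e q)) \<in> borel_measurable Q"
  proof -
    have "(\<lambda>q. f ((\<phi> ^^ Suc n) (w q))) \<in> borel_measurable Q"
      using measurable_compose[OF measurable_compose[OF w measurable_compose_n[OF ph]] f] by (simp add: o_def del: funpow.simps)
    thus ?thesis unfolding ts_eq
      by (intro borel_measurable_add borel_measurable_scaleR borel_measurable_diff e) simp_all
  qed
  from borel_measurable_continuous_Pair[OF this Suc mm_cont]
  show ?case by simp
qed



lemma cauchy_half: "(\<integral>\<^sup>+x. ennreal (1 / (1 + x\<^sup>2)) * indicator {0..} x \<partial>lborel) = ennreal (pi / 2)"
proof -
  have "(\<integral>\<^sup>+x. ennreal (1 / (1 + x\<^sup>2)) * indicator {0..} x \<partial>lborel) = ennreal (pi / 2 - arctan 0)"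
  proof (rule nn_integral_FTC_atLeast)
    show "(\<lambda>x::real. 1 / (1 + x\<^sup>2)) \<in> borel_measurable borel" by measurable
    show "DERIV arctan x :> 1 / (1 + x\<^sup>2)" for x
      using DERIV_arctan[of x] by (simp add: inverse_eq_divide)
    show "0 \<le> 1 / (1 + x\<^sup>2)" for x :: real by (simp add: add_pos_nonneg)
    show "(arctan \<longlongrightarrow> pi / 2) at_top" by (rule tendsto_arctan_at_top)
  qed
  thus ?thesis by simp
qed

lemma cauchy_fin: "(\<integral>\<^sup>+x. ennreal (1 / (1 + x\<^sup>2)) \<partial>lborel) \<le> ennreal pi"
proof -
  let ?h = "\<lambda>x::real. ennreal (1 / (1 + x\<^sup>2))"
  have "(\<integral>\<^sup>+x. ?h x \<partial>lborel) \<le> (\<integral>\<^sup>+x. ?h x * indicator {0..} x + ?h (-x) * indicator {0..} (-x) \<partial>lborel)"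
    by (intro nn_integral_mono) (auto split: split_indicator)
  also have "\<dots> = (\<integral>\<^sup>+x. ?h x * indicator {0..} x \<partial>lborel) + (\<integral>\<^sup>+x. ?h (-x) * indicator {0..} (-x) \<partial>lborel)"
    by (rule nn_integral_add) auto
  also have "(\<integral>\<^sup>+x. ?h (-x) * indicator {0..} (-x) \<partial>lborel) = (\<integral>\<^sup>+x. ?h x * indicator {0..} x \<partial>lborel)"
    using nn_integral_real_affine[of "\<lambda>x. ?h x * indicator {0..} x" "-1" 0] by simp
  finally show ?thesis using cauchy_half by (simp add: ennreal_plus[symmetric] del: ennreal_plus)
qed



lemma lyap_nonneg:
  assumes P: "prob_space M" and LD: "property_LD M \<phi> f"
  shows "lyap M \<phi> f E \<ge> 0"
proof (rule ccontr)
  interpret prob_space M by (rule P)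
  assume "\<not> ?thesis"
  hence L: "lyap M \<phi> f E < 0" by simp
  from LD[unfolded property_LD_def, rule_format, of "- lyap M \<phi> f E" E E] L
  obtain C \<eta> where C: "C > 0" "\<eta> > 0" and
    bd: "\<And>N. N \<ge> 1 \<Longrightarrow> measure M {\<omega> \<in> space M. \<bar>(1 / real N) * ln (opnorm (transfer \<phi> f E N \<omega>)) - lyap M \<phi> f E\<bar> \<ge> - lyap M \<phi> f E} \<le> C * exp (- \<eta> * real N)"
    by auto
  have all: "{\<omega> \<in> space M. \<bar>(1 / real N) * ln (opnorm (transfer \<phi> f E N \<omega>)) - lyap M \<phi> f E\<bar> \<ge> - lyap M \<phi> f E} = space M" for N
  proof -
    have "(1 / real N) * ln (opnorm (transfer \<phi> f E N \<omega>)) \<ge> 0" for \<omega>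
      using opnorm_transfer_ge1[of \<phi> f E N \<omega>] by simp
    hence "\<bar>(1 / real N) * ln (opnorm (transfer \<phi> f E N \<omega>)) - lyap M \<phi> f E\<bar> \<ge> - lyap M \<phi> f E" for \<omega>
      using L by (smt (verit))
    thus ?thesis by blast
  qed
  obtain N0 :: nat where N0: "N0 > ln C / \<eta>" using reals_Archimedean2 by blast
  define N where "N = Suc N0"
  have N: "real N > ln C / \<eta>" using N0 unfolding N_def by simp
  hence "ln C < \<eta> * real N" using C by (simp add: field_simps)
  hence "C < exp (\<eta> * real N)" using C by (metis exp_less_cancel_iff exp_ln)
  hence lt: "C * exp (- \<eta> * real N) < 1" by (simp add: exp_minus field_simps)
  have "N \<ge> 1" unfolding N_def by simp
  hence "1 \<le> C * exp (- \<eta> * real N)" using bd[of N] all[of N] prob_space by simp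
  thus False using lt by simp
qed

lemma good_bound:
  fixes x \<gamma> L :: real and N :: nat
  assumes x1: "x \<ge> 1" and N: "N \<ge> 1" and nb: "\<not> (\<gamma>/2 \<le> \<bar>(1/real N)*ln x - L\<bar>)" and L: "L \<ge> \<gamma>"
  shows "1/x^2 \<le> exp(-\<gamma>*N)"
proof -
  have a: "(1 / real N) * ln x > \<gamma>/2" using nb L by linarith
  have Np: "real N > 0" using N by simp
  have "ln x / real N > \<gamma>/2" using a by simp
  hence lx: "ln x > \<gamma>/2 * N" using Np by (simp add: pos_less_divide_eq)
  have xp: "x > 0" using x1 by simp
  have e2: "exp (2 * ln x) = x * x" by (simp only: mult_2 exp_add exp_ln[OF xp])
  have "1/x^2 = exp (- (2 * ln x))" by (simp only: exp_minus e2 power2_eq_square inverse_eq_divide)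
  also have "\<dots> \<le> exp (-\<gamma>*N)" using lx by simp
  finally show ?thesis .
qed

lemma tail_bound:
  fixes B E \<delta> y :: real and N :: nat
  assumes B: "B \<ge> 0" and E: "\<bar>E\<bar> > 2*B+5" and N: "N \<ge> 1" and d: "0 < \<delta>" "\<delta> \<le> 1/2"
    and y: "y \<ge> (\<bar>E\<bar>-B-1)^N"
  shows "1/y^2 \<le> (B+4)^2*8*exp(-\<delta>*N) * (1/(1+E^2))"
proof -
  define r where "r = \<bar>E\<bar>-B-1"
  define q where "q = B+4"
  have rq: "r \<ge> q" and q4: "q \<ge> 4" using B E unfolding r_def q_def by auto
  have rp: "r > 0" using rq q4 by linarith
  have rN: "r^N > 0" using rp by simp
  have yr: "y \<ge> r^N" using y unfolding r_def .
  have 1: "1/y^2 \<le> 1/(r^N)^2"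
  proof -
    have "y > 0" using yr rN by linarith
    have y2: "y^2 \<ge> (r^N)^2" by (rule power_mono[OF yr]) (use rN in linarith)
    have p1: "(r^N)^2 > 0" using rN by (rule zero_less_power)
    have p2: "y^2 > 0" using \<open>y > 0\<close> by simp
    show ?thesis by (rule divide_left_mono[OF y2]) (use p1 p2 in auto)
  qed
  obtain m where m: "N = Suc m" using N by (cases N) auto
  have eq: "(r^N)^2 = r^2 * (r^m)^2" unfolding m by (simp add: power_mult_distrib power2_eq_square algebra_simps)
  have r2: "r^2 \<ge> (1+E^2)/8"
  proof -
    have "r \<ge> \<bar>E\<bar>/2" using B E unfolding r_def by linarith
    hence "r^2 \<ge> (\<bar>E\<bar>/2)^2" using E B by (intro power_mono) auto
    moreover have "E^2 \<ge> 1"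
    proof -
      have "1 \<le> \<bar>E\<bar>" using E B by linarith
      hence "1 \<le> \<bar>E\<bar>^2" by (rule one_le_power)
      thus ?thesis by (simp only: power2_abs)
    qed
    ultimately show ?thesis by (simp add: power_divide power2_abs)
  qed
  have qm: "(q^m)^2 * q^2 \<ge> exp (\<delta>*N)"
  proof -
    have "\<delta>*N \<le> 1 * real N" using d by (intro mult_right_mono) auto
    hence "exp (\<delta>*N) \<le> exp (real N)" by simp
    also have "exp (real N) = exp 1 ^ N" by (simp add: exp_of_nat_mult[symmetric])
    also have "exp 1 ^ N \<le> q^N" using q4 exp_le by (intro power_mono) auto
    also have "q^N \<le> (q^N)^2" using q4 by (simp add: power2_eq_square)
    also have "(q^N)^2 = (q^m)^2 * q^2" unfolding m by (simp add: power2_eq_square algebra_simps)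
    finally show ?thesis .
  qed
  have rm: "(r^m)^2 \<ge> (q^m)^2" using rq q4 by (intro power_mono) auto
  have "(r^N)^2 \<ge> (1+E^2)/8 * (exp (\<delta>*N) / q^2)"
  proof -
    have "exp (\<delta>*N) / q^2 \<le> (q^m)^2" using qm q4 by (simp add: divide_le_eq)
    hence "exp (\<delta>*N) / q^2 \<le> (r^m)^2" using rm by linarith
    hence "(1+E^2)/8 * (exp (\<delta>*N) / q^2) \<le> r^2 * (r^m)^2"
      using r2 by (intro mult_mono) (auto simp: add_pos_nonneg)
    thus ?thesis unfolding eq .
  qed
  have "1/(r^N)^2 \<le> 1/((1+E^2)/8 * (exp (\<delta>*N) / q^2))"
  proof -
    have pa: "(1+E^2)/8 * (exp (\<delta>*N) / q^2) > 0" using q4 by (intro mult_pos_pos divide_pos_pos) (auto simp: add_pos_nonneg)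
    note ba = \<open>(r^N)^2 \<ge> (1+E^2)/8 * (exp (\<delta>*N) / q^2)\<close>
    have pb: "(r^N)^2 > 0" using pa ba by linarith
    have "0 < (r^N)^2 * ((1+E^2)/8 * (exp (\<delta>*N) / q^2))"
      using mult_pos_pos[OF pb pa] .
    from divide_left_mono[OF ba _ this, of 1] show ?thesis by simp
  qed
  also have "\<dots> = q^2*8*exp(-\<delta>*N) * (1/(1+E^2))"
  proof -
    have a: "1+E^2 \<noteq> 0" by (metis add_pos_nonneg zero_le_power2 zero_less_one less_irrefl)
    have b: "q^2 \<noteq> 0" using q4 by simp
    have c: "exp(-\<delta>*N) = 1 / exp (\<delta>*N)" by (simp add: exp_minus inverse_eq_divide)
    show ?thesis unfolding c using a b by (simp add: field_simps)
  qed
  finally show ?thesis using 1 unfolding q_def by linarith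
qed



theorem theorem3p9:
  fixes M :: "'a measure" and \<phi> :: "'a \<Rightarrow> 'a" and f :: "'a \<Rightarrow> real"
  assumes "prob_space M"
    and "bij_betw \<phi> (space M) (space M)"
    and "\<phi> \<in> measurable M M"
    and "the_inv_into (space M) \<phi> \<in> measurable M M"
    and "distr M M \<phi> = M"
    and "ergodic_map M \<phi>"
    and "f \<in> borel_measurable M"
    and "\<exists>B. \<forall>\<omega>\<in>space M. \<bar>f \<omega>\<bar> \<le> B"
    and "property_LD M \<phi> f"
    and "(INF E. lyap M \<phi> f E) > 0"
  shows "AE \<omega> in M.
           liminf (\<lambda>N. ereal (- (1 / real N) * ln (II \<phi> f N \<omega>))) > 0"
proof -
  interpret prob_space M by (rule assms(1))
  have phm: "\<phi> \<in> measurable M M" by fact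
  have fm: "f \<in> borel_measurable M" by fact
  obtain B0 where B0: "\<forall>\<omega>\<in>space M. \<bar>f \<omega>\<bar> \<le> B0" using assms(8) by blast
  define B where "B = max B0 0"
  have Bnn: "B \<ge> 0" by (simp add: B_def)
  have sp: "\<omega> \<in> space M \<Longrightarrow> (\<phi>^^k) \<omega> \<in> space M" for \<omega> k
    using measurable_space[OF measurable_compose_n[OF phm]] by blast
  have fB: "\<omega> \<in> space M \<Longrightarrow> \<bar>f ((\<phi>^^k) \<omega>)\<bar> \<le> B" for \<omega> k
    using B0 sp[of \<omega> k] unfolding B_def by fastforce
  have L0: "lyap M \<phi> f E \<ge> 0" for E by (rule lyap_nonneg[OF assms(1) assms(9)])
  define \<gamma> where "\<gamma> = (INF E. lyap M \<phi> f E)"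
  have gpos: "\<gamma> > 0" using assms(10) \<gamma>_def by simp
  have Lg: "lyap M \<phi> f E \<ge> \<gamma>" for E
    unfolding \<gamma>_def by (rule cINF_lower) (auto intro: bdd_belowI2[where m=0] L0)
  define K where "K = 2*B + 5"
  define q where "q = B + 4"
  have Kpos: "K > 0" using Bnn by (simp add: K_def)
  from assms(9)[unfolded property_LD_def, rule_format, of "\<gamma>/2" "-K" K] gpos Kpos
  obtain C \<eta> where C: "C > 0" "\<eta> > 0" and LDb: "\<And>N E. N \<ge> 1 \<Longrightarrow> E \<in> {-K..K} \<Longrightarrow>
     measure M {\<omega> \<in> space M. \<bar>(1 / real N) * ln (opnorm (transfer \<phi> f E N \<omega>)) - lyap M \<phi> f E\<bar> \<ge> \<gamma>/2}
       \<le> C * exp (- \<eta> * real N)"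
    by auto
  define \<delta> where "\<delta> = min (min \<gamma> \<eta>) 1 / 2"
  have dl: "\<delta> > 0" "2*\<delta> \<le> \<gamma>" "2*\<delta> \<le> \<eta>" "\<delta> \<le> 1/2"
    using gpos C unfolding \<delta>_def by auto
  define g where "g N \<omega> E = 1 / (opnorm (transfer \<phi> f E N \<omega>))^2" for N \<omega> E
  have g01: "0 < g N \<omega> E" "g N \<omega> E \<le> 1" for N \<omega> E
    using opnorm_transfer_ge1[of \<phi> f E N \<omega>] unfolding g_def by auto
  have gm_E: "\<omega> \<in> space M \<Longrightarrow> g N \<omega> \<in> borel_measurable lborel" for N \<omega>
  proof -
    assume \<omega>: "\<omega> \<in> space M"
    have [measurable]: "(\<lambda>E. transfer \<phi> f E N \<omega>) \<in> borel_measurable lborel"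
      using transfer_measurable[of "\<lambda>E. E" lborel "\<lambda>_. \<omega>" M \<phi> f N] phm fm \<omega> by auto
    show ?thesis unfolding g_def by measurable
  qed
  have gm_pair: "(\<lambda>x. g N (fst x) (snd x)) \<in> borel_measurable (M \<Otimes>\<^sub>M lborel)" for N
  proof -
    have [measurable]: "(\<lambda>x. transfer \<phi> f (snd x) N (fst x)) \<in> borel_measurable (M \<Otimes>\<^sub>M lborel)"
      using transfer_measurable[of snd "M \<Otimes>\<^sub>M lborel" fst M \<phi> f N] phm fm by auto
    show ?thesis unfolding g_def by measurable
  qed
  have gm_\<omega>: "(\<lambda>\<omega>. g N \<omega> E) \<in> borel_measurable M" for N E
  proof -
    have [measurable]: "(\<lambda>\<omega>. transfer \<phi> f E N \<omega>) \<in> borel_measurable M"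
      using transfer_measurable[of "\<lambda>_. E" M "\<lambda>\<omega>. \<omega>" M \<phi> f N] phm fm by auto
    show ?thesis unfolding g_def by measurable
  qed
  define J where "J N \<omega> = (\<integral>\<^sup>+E. ennreal (g N \<omega> E) * indicator {-K..K} E \<partial>lborel)" for N \<omega>
  have pw: "N \<ge> 1 \<Longrightarrow> E \<in> {-K..K} \<Longrightarrow> (\<integral>\<^sup>+\<omega>. ennreal (g N \<omega> E) \<partial>M) \<le> ennreal ((1+C) * exp(-2*\<delta>*N))" for N E
  proof -
    assume N: "N \<ge> 1" and E: "E \<in> {-K..K}"
    define bad where "bad = {\<omega> \<in> space M. \<bar>(1 / real N) * ln (opnorm (transfer \<phi> f E N \<omega>)) - lyap M \<phi> f E\<bar> \<ge> \<gamma>/2}"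
    have [measurable]: "(\<lambda>\<omega>. transfer \<phi> f E N \<omega>) \<in> borel_measurable M"
      using transfer_measurable[of "\<lambda>_. E" M "\<lambda>\<omega>. \<omega>" M \<phi> f N] phm fm by auto
    have badm: "bad \<in> sets M" unfolding bad_def by measurable
    have pt: "ennreal (g N \<omega> E) \<le> ennreal (exp (-\<gamma>*N)) + indicator bad \<omega>" if \<omega>: "\<omega> \<in> space M" for \<omega>
    proof (cases "\<omega> \<in> bad")
      case True
      have "ennreal (g N \<omega> E) \<le> 1" using g01[of N \<omega> E] by simp
      also have "1 \<le> ennreal (exp (-\<gamma>*N)) + indicator bad \<omega>" using True by simp
      finally show ?thesis .
    next
      case False
      have "\<not> (\<gamma>/2 \<le> \<bar>(1 / real N) * ln (opnorm (transfer \<phi> f E N \<omega>)) - lyap M \<phi> f E\<bar>)"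
        using False \<omega> unfolding bad_def by blast
      from good_bound[OF opnorm_transfer_ge1 N this Lg]
      have "g N \<omega> E \<le> exp (-\<gamma>*N)" unfolding g_def .
      hence "ennreal (g N \<omega> E) \<le> ennreal (exp (-\<gamma>*N))" by (rule ennreal_leI)
      thus ?thesis using False by simp
    qed
    have "(\<integral>\<^sup>+\<omega>. ennreal (g N \<omega> E) \<partial>M) \<le> (\<integral>\<^sup>+\<omega>. ennreal (exp (-\<gamma>*N)) + indicator bad \<omega> \<partial>M)"
      by (rule nn_integral_mono) (rule pt)
    also have "\<dots> = ennreal (exp (-\<gamma>*N)) + emeasure M bad"
      using badm by (simp add: nn_integral_add emeasure_space_1)
    also have "\<dots> = ennreal (exp (-\<gamma>*N) + measure M bad)"
      by (simp add: emeasure_eq_measure ennreal_plus)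
    also have "\<dots> \<le> ennreal ((1+C) * exp(-2*\<delta>*N))"
    proof (rule ennreal_leI)
      have "measure M bad \<le> C * exp (- \<eta> * real N)" unfolding bad_def by (rule LDb[OF N E])
      also have "\<dots> \<le> C * exp(-2*\<delta>*N)" using C dl by (intro mult_left_mono) (auto simp: mult_right_mono)
      finally have 1: "measure M bad \<le> C * exp(-2*\<delta>*N)" .
      have 2: "-\<gamma>*N \<le> -2*\<delta>*N" using dl by (simp add: mult_right_mono)
      have 3: "exp (-\<gamma>*N) \<le> exp(-2*\<delta>*N)" using 2 by (simp only: exp_le_cancel_iff)
      have 4: "(1+C)*exp(-2*\<delta>*N) = exp(-2*\<delta>*N) + C*exp(-2*\<delta>*N)" by (simp add: algebra_simps)
      show "exp (-\<gamma>*N) + measure M bad \<le> (1+C) * exp(-2*\<delta>*N)" using 1 3 4 by linarith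
    qed
    finally show ?thesis .
  qed
  interpret pp: pair_sigma_finite M lborel
    unfolding pair_sigma_finite_def using sigma_finite_measure_axioms lborel.sigma_finite_measure_axioms by blast
  have EJ: "N \<ge> 1 \<Longrightarrow> (\<integral>\<^sup>+\<omega>. J N \<omega> \<partial>M) \<le> ennreal (2*K*(1+C)*exp(-2*\<delta>*N))" for N
  proof -
    assume N: "N \<ge> 1"
    have cm: "case_prod (\<lambda>\<omega> E. ennreal (g N \<omega> E) * indicator {-K..K} E) \<in> borel_measurable (M \<Otimes>\<^sub>M lborel)"
    proof -
      have "(\<lambda>x. ennreal (g N (fst x) (snd x)) * indicator {-K..K} (snd x)) \<in> borel_measurable (M \<Otimes>\<^sub>M lborel)"
        using gm_pair[of N] by measurable
      thus ?thesis by (simp add: case_prod_beta')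
    qed
    have "(\<integral>\<^sup>+\<omega>. J N \<omega> \<partial>M) = (\<integral>\<^sup>+E. (\<integral>\<^sup>+\<omega>. ennreal (g N \<omega> E) * indicator {-K..K} E \<partial>M) \<partial>lborel)"
      unfolding J_def by (rule pp.Fubini'[OF cm, symmetric])
    also have "\<dots> = (\<integral>\<^sup>+E. (\<integral>\<^sup>+\<omega>. ennreal (g N \<omega> E) \<partial>M) * indicator {-K..K} E \<partial>lborel)"
      by (intro nn_integral_cong nn_integral_multc) (use gm_\<omega> in simp)
    also have "\<dots> \<le> (\<integral>\<^sup>+E. ennreal ((1+C) * exp(-2*\<delta>*N)) * indicator {-K..K} E \<partial>lborel)"
      by (intro nn_integral_mono) (use pw[OF N] in \<open>auto split: split_indicator\<close>)
    also have "\<dots> = ennreal ((1+C) * exp(-2*\<delta>*N)) * ennreal (2*K)"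
      using Kpos by (simp add: nn_integral_cmult_indicator)
    also have "\<dots> = ennreal (2*K*(1+C)*exp(-2*\<delta>*N))"
      using Kpos C by (simp add: ennreal_mult[symmetric] algebra_simps)
    finally show ?thesis .
  qed
  have Jm: "(\<lambda>\<omega>. J N \<omega>) \<in> borel_measurable M" for N
  proof -
    have "(\<lambda>x. ennreal (g N (fst x) (snd x)) * indicator {-K..K} (snd x)) \<in> borel_measurable (M \<Otimes>\<^sub>M lborel)"
      using gm_pair[of N] by measurable
    hence "case_prod (\<lambda>\<omega> E. ennreal (g N \<omega> E) * indicator {-K..K} E) \<in> borel_measurable (M \<Otimes>\<^sub>M lborel)"
      by (simp add: case_prod_beta')
    from lborel.borel_measurable_nn_integral[OF this] show ?thesis unfolding J_def .
  qed
  define A where "A n = {\<omega> \<in> space M. ennreal (exp (-\<delta>*Suc n)) \<le> J (Suc n) \<omega>}" for n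
  have Am: "A n \<in> sets M" for n
    unfolding A_def using Jm[of "Suc n"] by measurable
  have Ab: "measure M (A n) \<le> 2*K*(1+C)*exp(-\<delta>)^(Suc n)" for n
  proof -
    define N where "N = Suc n"
    have N1: "N \<ge> 1" by (simp add: N_def)
    have "emeasure M (A n) = (\<integral>\<^sup>+\<omega>. indicator (A n) \<omega> \<partial>M)" using Am by simp
    also have "\<dots> \<le> (\<integral>\<^sup>+\<omega>. ennreal (exp (\<delta>*N)) * J N \<omega> \<partial>M)"
    proof (intro nn_integral_mono)
      fix \<omega> assume "\<omega> \<in> space M"
      show "indicator (A n) \<omega> \<le> ennreal (exp (\<delta>*N)) * J N \<omega>"
      proof (cases "\<omega> \<in> A n")
        case True
        hence "ennreal (exp (-\<delta>*N)) \<le> J N \<omega>" unfolding A_def N_def by simp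
        hence "ennreal (exp (\<delta>*N)) * ennreal (exp (-\<delta>*N)) \<le> ennreal (exp (\<delta>*N)) * J N \<omega>"
          by (rule mult_left_mono) simp
        moreover have "ennreal (exp (\<delta>*N)) * ennreal (exp (-\<delta>*N)) = 1"
          by (simp add: ennreal_mult[symmetric] exp_add[symmetric])
        ultimately show ?thesis using True by simp
      qed simp
    qed
    also have "\<dots> = ennreal (exp (\<delta>*N)) * (\<integral>\<^sup>+\<omega>. J N \<omega> \<partial>M)"
      by (rule nn_integral_cmult[OF Jm])
    also have "\<dots> \<le> ennreal (exp (\<delta>*N)) * ennreal (2*K*(1+C)*exp(-2*\<delta>*N))"
      by (rule mult_left_mono[OF EJ[OF N1]]) simp
    also have "\<dots> = ennreal (2*K*(1+C)*exp(-\<delta>*N))"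
    proof -
      have "exp (\<delta>*N) * (2*K*(1+C)*exp(-2*\<delta>*N)) = 2*K*(1+C)*(exp (\<delta>*N) * exp(-2*\<delta>*N))" by simp
      also have "exp (\<delta>*N) * exp(-2*\<delta>*N) = exp(-\<delta>*N)" by (simp add: exp_add[symmetric])
      finally have e: "exp (\<delta>*N) * (2*K*(1+C)*exp(-2*\<delta>*N)) = 2*K*(1+C)*exp(-\<delta>*N)" .
      have "ennreal (exp (\<delta>*N)) * ennreal (2*K*(1+C)*exp(-2*\<delta>*N)) = ennreal (exp (\<delta>*N) * (2*K*(1+C)*exp(-2*\<delta>*N)))"
        using Kpos C by (intro ennreal_mult[symmetric]) auto
      thus ?thesis unfolding e .
    qed
    also have "2*K*(1+C)*exp(-\<delta>*N) = 2*K*(1+C)*exp(-\<delta>)^(Suc n)"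
      unfolding N_def using exp_of_nat_mult[of "Suc n" "-\<delta>"] by (simp add: mult.commute)
    finally have "ennreal (measure M (A n)) \<le> ennreal (2*K*(1+C)*exp(-\<delta>)^(Suc n))"
      by (simp add: emeasure_eq_measure)
    thus ?thesis using Kpos C by (subst (asm) ennreal_le_iff) auto
  qed
  have AE1: "AE \<omega> in M. eventually (\<lambda>n. \<omega> \<in> space M - A n) sequentially"
  proof (rule borel_cantelli_AE1[OF Am])
    show "emeasure M (A n) < \<infinity>" for n by (simp add: emeasure_eq_measure)
    have ed: "norm (exp (-\<delta>)) < 1" using dl by simp
    have "summable (\<lambda>n. 2*K*(1+C)*exp(-\<delta>) * exp(-\<delta>)^n)"
      by (intro summable_mult summable_geometric ed)
    hence sg: "summable (\<lambda>n. 2*K*(1+C)*exp(-\<delta>)^(Suc n))" by (simp add: mult.assoc)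
    show "summable (\<lambda>n. measure M (A n))"
      by (rule summable_comparison_test[OF _ sg]) (use Ab in auto)
  qed
  have out: "\<omega> \<in> space M \<Longrightarrow> N \<ge> 1 \<Longrightarrow> (\<integral>\<^sup>+E. ennreal (g N \<omega> E * indicator (-{-K..K}) E) \<partial>lborel)
     \<le> ennreal (q^2 * 8 * pi * exp(-\<delta>*N))" for \<omega> N
  proof -
    assume \<omega>: "\<omega> \<in> space M" and N: "N \<ge> 1"
    define c where "c = q^2 * 8 * exp(-\<delta>*N)"
    have c0: "c \<ge> 0" unfolding c_def by simp
    have pt: "ennreal (g N \<omega> E * indicator (-{-K..K}) E) \<le> ennreal c * ennreal (1 / (1 + E\<^sup>2))" for E
    proof (cases "E \<in> {-K..K}")
      case False
      hence EK: "\<bar>E\<bar> > 2*B+5" unfolding K_def by auto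
      have "1 \<le> \<bar>E\<bar> - B - 1" using EK Bnn by linarith
      from opnorm_growth[of f \<phi> \<omega> B E N, OF fB[OF \<omega>] this]
      have "1/(opnorm (transfer \<phi> f E N \<omega>))^2 \<le> (B+4)^2*8*exp(-\<delta>*N) * (1/(1+E^2))"
        by (intro tail_bound[OF Bnn EK N dl(1) dl(4)])
      hence "g N \<omega> E * indicator (-{-K..K}) E \<le> c * (1 / (1 + E\<^sup>2))"
        using False unfolding g_def c_def q_def by simp
      thus ?thesis using c0 by (simp add: ennreal_mult[symmetric] ennreal_leI)
    qed simp
    have "(\<integral>\<^sup>+E. ennreal (g N \<omega> E * indicator (-{-K..K}) E) \<partial>lborel) \<le> (\<integral>\<^sup>+E. ennreal c * ennreal (1 / (1 + E\<^sup>2)) \<partial>lborel)"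
      by (rule nn_integral_mono) (rule pt)
    also have "\<dots> = ennreal c * (\<integral>\<^sup>+E. ennreal (1 / (1 + E\<^sup>2)) \<partial>lborel)"
      by (rule nn_integral_cmult) measurable
    also have "\<dots> \<le> ennreal c * ennreal pi"
      by (rule mult_left_mono[OF cauchy_fin]) simp
    also have "\<dots> = ennreal (q^2 * 8 * pi * exp(-\<delta>*N))"
      using c0 by (simp add: ennreal_mult[symmetric] c_def algebra_simps)
    finally show ?thesis .
  qed
  define Cst where "Cst = 1 + q^2 * 8 * pi"
  have Cst1: "Cst \<ge> 1" unfolding Cst_def by simp
  have key: "\<omega> \<in> space M \<Longrightarrow> N \<ge> 1 \<Longrightarrow> J N \<omega> < ennreal (exp(-\<delta>*N)) \<Longrightarrow>
      0 < II \<phi> f N \<omega> \<and> II \<phi> f N \<omega> \<le> Cst * exp(-\<delta>*N)" for \<omega> N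
  proof -
    assume \<omega>: "\<omega> \<in> space M" and N: "N \<ge> 1" and JN: "J N \<omega> < ennreal (exp(-\<delta>*N))"
    note gm = gm_E[OF \<omega>, of N]
    define X where "X = (\<integral>\<^sup>+E. ennreal (g N \<omega> E) \<partial>lborel)"
    have IIX: "II \<phi> f N \<omega> = enn2real X"
    proof -
      have "II \<phi> f N \<omega> = integral\<^sup>L lborel (g N \<omega>)" unfolding II_def g_def ..
      also have "\<dots> = enn2real X" unfolding X_def
        by (rule integral_eq_nn_integral[OF gm]) (simp add: g01(1) less_imp_le)
      finally show ?thesis .
    qed
    have "X = (\<integral>\<^sup>+E. ennreal (g N \<omega> E) * indicator {-K..K} E + ennreal (g N \<omega> E * indicator (-{-K..K}) E) \<partial>lborel)"
      unfolding X_def by (intro nn_integral_cong) (auto split: split_indicator)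
    also have "\<dots> = J N \<omega> + (\<integral>\<^sup>+E. ennreal (g N \<omega> E * indicator (-{-K..K}) E) \<partial>lborel)"
      unfolding J_def using gm by (intro nn_integral_add) auto
    also have "\<dots> \<le> ennreal (exp(-\<delta>*N)) + ennreal (q^2 * 8 * pi * exp(-\<delta>*N))"
      using JN out[OF \<omega> N] by (intro add_mono) auto
    also have "\<dots> = ennreal (Cst * exp(-\<delta>*N))"
      by (simp add: Cst_def algebra_simps flip: ennreal_plus)
    finally have Xle: "X \<le> ennreal (Cst * exp(-\<delta>*N))" .
    have X0: "X \<noteq> 0"
    proof
      assume "X = 0"
      hence "AE E in lborel. ennreal (g N \<omega> E) = 0" unfolding X_def using gm
        by (subst (asm) nn_integral_0_iff_AE) auto
      hence "AE (E::real) in lborel. False"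
      proof eventually_elim
        case (elim E) thus ?case using g01(1)[of N \<omega> E] by simp
      qed
      hence "ae_filter lborel = (bot :: real filter)" using trivial_limit_def by blast
      thus False by (simp add: ae_filter_eq_bot_iff)
    qed
    have Xfin: "X < \<top>" using Xle by (simp add: le_less_trans)
    have "0 < enn2real X" using X0 Xfin by (simp add: enn2real_positive_iff less_top[symmetric] zero_less_iff_neq_zero)
    moreover have "enn2real X \<le> Cst * exp(-\<delta>*N)"
      using Xle Cst1 by (intro enn2real_leI) auto
    ultimately show ?thesis unfolding IIX by simp
  qed
  have fin: "\<delta>/2 \<le> - (1 / real N) * ln (II \<phi> f N \<omega>)"
    if "N \<ge> 1" "real N \<ge> 2 * ln Cst / \<delta>" "0 < II \<phi> f N \<omega>" "II \<phi> f N \<omega> \<le> Cst * exp(-\<delta>*N)" for N \<omega>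
  proof -
    have "ln (II \<phi> f N \<omega>) \<le> ln (Cst * exp(-\<delta>*N))" using that Cst1 by simp
    also have "\<dots> = ln Cst - \<delta>*N" using Cst1 by (simp add: ln_mult)
    finally have l: "ln (II \<phi> f N \<omega>) \<le> ln Cst - \<delta>*N" .
    have Np: "real N > 0" using that by simp
    have "ln Cst \<le> \<delta> * N / 2" using that(2) dl(1) by (simp add: field_simps)
    hence "ln (II \<phi> f N \<omega>) \<le> - (\<delta>/2) * N" using l by simp
    hence "- ln (II \<phi> f N \<omega>) / N \<ge> \<delta>/2" using Np by (simp add: field_simps)
    thus ?thesis by simp
  qed
  show ?thesis using AE1
  proof eventually_elim
    case (elim \<omega>)
    have \<omega>: "\<omega> \<in> space M" using elim by (auto simp: eventually_sequentially)
    have "eventually (\<lambda>n. J (Suc n) \<omega> < ennreal (exp(-\<delta>*Suc n))) sequentially"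
      using elim by eventually_elim (auto simp: A_def not_le)
    hence e1: "eventually (\<lambda>N. J N \<omega> < ennreal (exp(-\<delta>*N))) sequentially"
      by (rule eventually_sequentially_Suc[THEN iffD1])
    have e2: "eventually (\<lambda>N. N \<ge> 1 \<and> real N \<ge> 2 * ln Cst / \<delta>) sequentially"
    proof -
      obtain N0 :: nat where "real N0 \<ge> 2 * ln Cst / \<delta>" using real_arch_simple by blast
      hence "\<forall>N\<ge>max N0 1. N \<ge> 1 \<and> real N \<ge> 2 * ln Cst / \<delta>" by auto
      thus ?thesis unfolding eventually_sequentially by blast
    qed
    have "eventually (\<lambda>N. ereal (\<delta>/2) \<le> ereal (- (1 / real N) * ln (II \<phi> f N \<omega>))) sequentially"
      using e1 e2
    proof eventually_elim
      case (elim N)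
      thus ?case using key[OF \<omega>, of N] fin[of N \<omega>] by simp
    qed
    hence "ereal (\<delta>/2) \<le> liminf (\<lambda>N. ereal (- (1 / real N) * ln (II \<phi> f N \<omega>)))"
      by (rule Liminf_bounded)
    moreover have "0 < ereal (\<delta>/2)" using dl by simp
    ultimately show ?case by (rule order.strict_trans2[rotated])
  qed
qed


end
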